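(* For each $C>0$ and $K>1$ there exist $D=D(K,C)>C$ and $L=L(K,C)>C$ with the following property. Let $J\subseteq\mathbb Z$ be a nonempty set of consecutive integers, $p\in X$, and for each $i\in J$ let $\kappa_i$ be a $K$-contracting axis from $x_i$ to $y_i$ whose domain has length greater than $L$. Suppose $(\kappa_i)_{i\in J}$ is $C$-aligned. Then: (1) for each $i\in J$, the statements "$(\kappa_i,p)$ is $D$-aligned" and "$(p,\kappa_i)$ is $D$-aligned" cannot hold simultaneously; (2) the set $J_0=\{j\in J:(\kappa_i,p)\text{ is }D\text{-aligned for all }i\in J,\ i<j,\text{ and }(p,\kappa_i)\text{ is }D\text{-aligned for all }i\in J,\ i>j\}$ consists of either a single integer or two consecutive integers; (3) $\pi_{\bigcup_i\kappa_i}(p)$ is nonempty and contained in $\bigcup_{j\in J_0}\pi_{\kappa_j}(p)$; (4) $(\kappa_l,\kappa_m)$ is $D$-aligned for all $l,m\in J$ with $l<m$.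
   Context: $X$ is a geodesic metric space. For $A\subseteq X$, $\pi_A(z)=\{a\in A:d(z,a)=d(z,A)\}$ and $\pi_A(B)=\bigcup_{b\in B}\pi_A(b)$. $A$ is $K$-contracting if $\pi_A(z)\ne\emptyset$ for all $z$ and $d(x,y)\le d(x,A)-K$ implies $\operatorname{diam}(\pi_A(x)\cup\pi_A(y))\le K$. A $K$-quasigeodesic is a map $\gamma$ from an interval of $\mathbb R$ or a set of consecutive integers to $X$ with $|s-t|/K-K\le d(\gamma(s),\gamma(t))\le K|s-t|+K$; a $K$-contracting axis is a $K$-quasigeodesic with $K$-contracting image; projections onto a path mean onto its image. Alignment: for paths $\kappa$ from $a$ to $a'$ and $\eta$ from $b'$ to $b$, $(\kappa,\eta)$ is $C$-aligned if $\operatorname{diam}(a'\cup\pi_\kappa(\eta))<C$ and $\operatorname{diam}(b'\cup\pi_\eta(\kappa))<C$. A sequence $(\kappa_i)_{i\in J}$ of paths is $C$-aligned if $(\kappa_i,\kappa_{i+1})$ is $C$-aligned whenever $i,i+1\in J$. A point is treated as a degenerate path with both endpoints equal to itself; thus $(\kappa,p)$ is $D$-aligned iff $\operatorname{diam}(a'\cup\pi_\kappa(p))<D$ where $a'$ is the terminal point of $\kappa$, and $(p,\kappa)$ is $D$-aligned iff $\operatorname{diam}(a\cup\pi_\kappa(p))<D$ where $a$ is the initial point of $\kappa$. *)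

theory Defs
  imports "HOL-Analysis.Analysis"
begin

text \<open>The metric space X is given explicitly as a carrier M with metric d
(so that the constants D, L can be quantified before the space).\<close>

definition geodesic_space :: "'a set \<Rightarrow> ('a \<Rightarrow> 'a \<Rightarrow> real) \<Rightarrow> bool" where
  "geodesic_space M d \<longleftrightarrow> Metric_space M d \<and>
     (\<forall>x\<in>M. \<forall>y\<in>M. \<exists>g::real \<Rightarrow> 'a. g ` {0..d x y} \<subseteq> M \<and> g 0 = x \<and> g (d x y) = y \<and>
        (\<forall>s\<in>{0..d x y}. \<forall>t\<in>{0..d x y}. d (g s) (g t) = \<bar>s - t\<bar>))"

definition setdist :: "('a \<Rightarrow> 'a \<Rightarrow> real) \<Rightarrow> 'a \<Rightarrow> 'a set \<Rightarrow> real" where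
  "setdist d z A = Inf (d z ` A)"

definition proj :: "('a \<Rightarrow> 'a \<Rightarrow> real) \<Rightarrow> 'a set \<Rightarrow> 'a \<Rightarrow> 'a set" where
  "proj d A z = {a \<in> A. d z a = setdist d z A}"

definition proj_set :: "('a \<Rightarrow> 'a \<Rightarrow> real) \<Rightarrow> 'a set \<Rightarrow> 'a set \<Rightarrow> 'a set" where
  "proj_set d A B = (\<Union>b\<in>B. proj d A b)"

text \<open>diameter, valued in the extended reals (so unbounded sets have diameter \<infinity>)\<close>
definition diam :: "('a \<Rightarrow> 'a \<Rightarrow> real) \<Rightarrow> 'a set \<Rightarrow> ereal" where
  "diam d S = (SUP p\<in>S \<times> S. ereal (d (fst p) (snd p)))"

definition contracting :: "'a set \<Rightarrow> ('a \<Rightarrow> 'a \<Rightarrow> real) \<Rightarrow> real \<Rightarrow> 'a set \<Rightarrow> bool" where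
  "contracting M d K A \<longleftrightarrow>
     (\<forall>z\<in>M. proj d A z \<noteq> {}) \<and>
     (\<forall>x\<in>M. \<forall>y\<in>M. d x y \<le> setdist d x A - K \<longrightarrow>
        diam d (proj d A x \<union> proj d A y) \<le> ereal K)"

definition path_domain :: "real set \<Rightarrow> real \<Rightarrow> real \<Rightarrow> bool" where
  "path_domain I a b \<longleftrightarrow> a \<le> b \<and>
     (I = {a..b} \<or> (a \<in> \<int> \<and> b \<in> \<int> \<and> I = {a..b} \<inter> \<int>))"

definition quasigeodesic :: "('a \<Rightarrow> 'a \<Rightarrow> real) \<Rightarrow> real \<Rightarrow> (real \<Rightarrow> 'a) \<Rightarrow> real set \<Rightarrow> bool" where
  "quasigeodesic d K \<gamma> I \<longleftrightarrow>
     (\<forall>s\<in>I. \<forall>t\<in>I. \<bar>s - t\<bar> / K - K \<le> d (\<gamma> s) (\<gamma> t) \<and> d (\<gamma> s) (\<gamma> t) \<le> K * \<bar>s - t\<bar> + K)"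

definition contracting_axis ::
  "'a set \<Rightarrow> ('a \<Rightarrow> 'a \<Rightarrow> real) \<Rightarrow> real \<Rightarrow> (real \<Rightarrow> 'a) \<Rightarrow> real set \<Rightarrow> real \<Rightarrow> real \<Rightarrow> bool" where
  "contracting_axis M d K \<gamma> I a b \<longleftrightarrow>
     path_domain I a b \<and> \<gamma> ` I \<subseteq> M \<and> quasigeodesic d K \<gamma> I \<and> contracting M d K (\<gamma> ` I)"

text \<open>A path is represented for alignment purposes by (image, initial point, terminal point).\<close>
type_synonym 'a pth = "'a set \<times> 'a \<times> 'a"

definition axis_path :: "(real \<Rightarrow> 'a) \<Rightarrow> real set \<Rightarrow> real \<Rightarrow> real \<Rightarrow> 'a pth" where
  "axis_path \<gamma> I a b = (\<gamma> ` I, \<gamma> a, \<gamma> b)"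

definition point_path :: "'a \<Rightarrow> 'a pth" where
  "point_path p = ({p}, p, p)"

definition aligned :: "('a \<Rightarrow> 'a \<Rightarrow> real) \<Rightarrow> real \<Rightarrow> 'a pth \<Rightarrow> 'a pth \<Rightarrow> bool" where
  "aligned d C \<kappa> \<eta> \<longleftrightarrow>
     (case \<kappa> of (A, a, a') \<Rightarrow> case \<eta> of (B, b', b) \<Rightarrow>
        diam d (insert a' (proj_set d A B)) < ereal C \<and>
        diam d (insert b' (proj_set d B A)) < ereal C)"

definition consecutive_ints :: "int set \<Rightarrow> bool" where
  "consecutive_ints J \<longleftrightarrow> (\<forall>i\<in>J. \<forall>j\<in>J. \<forall>k. i \<le> k \<and> k \<le> j \<longrightarrow> k \<in> J)"

end

theory Submission
  imports Defs
begin


lemma setdist_le: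
  assumes "Metric_space M d" "a \<in> A"
  shows "setdist d z A \<le> d z a"
  unfolding setdist_def
  by (rule cInf_lower) (use assms in \<open>auto intro!: bdd_belowI[where m=0] simp: Metric_space.nonneg\<close>)

lemma setdist_greatest:
  assumes "A \<noteq> {}" "\<And>a. a \<in> A \<Longrightarrow> c \<le> d z a"
  shows "c \<le> setdist d z A"
  unfolding setdist_def using assms by (intro cInf_greatest) auto

lemma setdist_nonneg:
  assumes "Metric_space M d" "A \<noteq> {}"
  shows "0 \<le> setdist d z A"
  using assms by (intro setdist_greatest) (auto simp: Metric_space.nonneg)

lemma setdist_lip:
  assumes "Metric_space M d" "A \<subseteq> M" "A \<noteq> {}" "z \<in> M" "w \<in> M"
  shows "setdist d z A \<le> d z w + setdist d w A"
proof -
  have "setdist d z A - d z w \<le> setdist d w A"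
  proof (rule setdist_greatest[OF assms(3)])
    fix a assume a: "a \<in> A"
    have "setdist d z A \<le> d z a" by (rule setdist_le[OF assms(1) a])
    also have "\<dots> \<le> d z w + d w a" using Metric_space.triangle[OF assms(1)] a assms by auto
    finally show "setdist d z A - d z w \<le> d w a" by simp
  qed
  then show ?thesis by simp
qed

lemma proj_D:
  assumes "p \<in> proj d A z"
  shows "p \<in> A" "d z p = setdist d z A"
  using assms unfolding proj_def by auto

lemma proj_I:
  assumes "Metric_space M d" "a \<in> A" "\<And>b. b \<in> A \<Longrightarrow> d z a \<le> d z b"
  shows "a \<in> proj d A z"
proof -
  have "setdist d z A \<le> d z a" by (rule setdist_le[OF assms(1,2)])
  moreover have "d z a \<le> setdist d z A" using assms by (intro setdist_greatest) auto
  ultimately show ?thesis unfolding proj_def using assms by auto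
qed

lemma d_self:
  assumes "Metric_space M d" "x \<in> M"
  shows "d x x = 0"
  using Metric_space.zero[OF assms(1) assms(2) assms(2)] by simp

lemma setdist_self:
  assumes "Metric_space M d" "a \<in> A" "A \<subseteq> M"
  shows "setdist d a A = 0"
proof -
  have "a \<in> M" using assms by blast
  then have "setdist d a A \<le> 0" using setdist_le[OF assms(1,2), of a] d_self[OF assms(1), of a] by simp
  moreover have "0 \<le> setdist d a A" using setdist_nonneg[OF assms(1), of A a] assms(2) by blast
  ultimately show ?thesis by simp
qed
  
lemma proj_self:
  assumes "Metric_space M d" "a \<in> A" "A \<subseteq> M"
  shows "a \<in> proj d A a"
  using assms d_self[OF assms(1), of a] by (intro proj_I[OF assms(1,2)]) (auto simp: Metric_space.nonneg)

lemma diam_ge: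
  assumes "p \<in> S" "q \<in> S"
  shows "ereal (d p q) \<le> diam d S"
  unfolding diam_def using assms by (intro SUP_upper2[of "(p,q)"]) auto

lemma diam_lt_D:
  assumes "diam d S < ereal B" "p \<in> S" "q \<in> S"
  shows "d p q < B"
proof -
  have "ereal (d p q) < ereal B" using diam_ge[OF assms(2,3), of d] assms(1) by (rule le_less_trans)
  then show ?thesis by simp
qed

lemma diam_le_pairs:
  assumes "\<And>p q. p \<in> S \<Longrightarrow> q \<in> S \<Longrightarrow> d p q \<le> B"
  shows "diam d S \<le> ereal B"
  unfolding diam_def using assms by (intro SUP_least) auto

lemma contr_ball:
  assumes "contracting M d K A" "x \<in> M" "y \<in> M" "d x y \<le> setdist d x A - K"
    "p \<in> proj d A x \<union> proj d A y" "q \<in> proj d A x \<union> proj d A y"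
  shows "d p q \<le> K"
proof -
  have "\<forall>x\<in>M. \<forall>y\<in>M. d x y \<le> setdist d x A - K \<longrightarrow> diam d (proj d A x \<union> proj d A y) \<le> ereal K"
    using assms(1) unfolding contracting_def by blast
  then have "diam d (proj d A x \<union> proj d A y) \<le> ereal K"
    using assms(2-4) by blast
  with diam_ge[OF assms(5,6), of d] have "ereal (d p q) \<le> ereal K" by (rule order_trans)
  then show ?thesis by simp
qed

lemma contr_ne':
  assumes "contracting M d K A" "z \<in> M"
  shows "proj d A z \<noteq> {}"
proof -
  have "\<forall>z\<in>M. proj d A z \<noteq> {}" using assms(1) unfolding contracting_def by (rule conjunct1)
  then show "proj d A z \<noteq> {}" using assms(2) by (rule bspec)
qed

lemma contr_ne:
  assumes "contracting M d K A" "z \<in> M"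
  obtains p where "p \<in> proj d A z"
proof -
  have "\<exists>p. p \<in> proj d A z" using contr_ne'[OF assms] by (simp add: ex_in_conv)
  then obtain p where "p \<in> proj d A z" by (rule exE)
  then show ?thesis by (rule that)
qed

lemma contr_Ane:
  assumes "contracting M d K A" "z \<in> M"
  shows "A \<noteq> {}"
proof -
  obtain p where p: "p \<in> proj d A z" by (rule contr_ne[OF assms])
  have "p \<in> A" by (rule proj_D(1)[OF p])
  then show ?thesis by auto
qed

lemma proj_diam:
  assumes "Metric_space M d" "contracting M d K A" "A \<subseteq> M" "z \<in> M"
    "p \<in> proj d A z" "q \<in> proj d A z"
  shows "d p q \<le> 2 * K"
proof (cases "setdist d z A \<ge> K")
  case True
  have "d z z \<le> setdist d z A - K" using True d_self[OF assms(1,4)] by simp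
  moreover have "p \<in> proj d A z \<union> proj d A z" "q \<in> proj d A z \<union> proj d A z" using assms(5,6) by simp_all
  ultimately have "d p q \<le> K" by (rule contr_ball[OF assms(2,4,4)])
  moreover have "0 \<le> d p q" using Metric_space.nonneg[OF assms(1)] .
  ultimately show ?thesis by linarith
next
  case False
  have "p \<in> M" "q \<in> M" using assms(3) proj_D(1)[OF assms(5)] proj_D(1)[OF assms(6)] by blast+
  then have "d p q \<le> d p z + d z q" using Metric_space.triangle[OF assms(1) _ assms(4)] by blast
  also have "\<dots> = 2 * setdist d z A" using proj_D(2)[OF assms(5)] proj_D(2)[OF assms(6)]
    Metric_space.commute[OF assms(1)] by simp
  finally show ?thesis using False by linarith
qed

definition geod :: "'a set \<Rightarrow> ('a \<Rightarrow> 'a \<Rightarrow> real) \<Rightarrow> (real \<Rightarrow> 'a) \<Rightarrow> real \<Rightarrow> bool" where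
  "geod M d g l \<longleftrightarrow> g ` {0..l} \<subseteq> M \<and> (\<forall>s\<in>{0..l}. \<forall>t\<in>{0..l}. d (g s) (g t) = \<bar>s - t\<bar>)"

lemma geodD:
  assumes "geod M d g l" "0 \<le> s" "s \<le> l" "0 \<le> t" "t \<le> l"
  shows "g s \<in> M" "d (g s) (g t) = \<bar>s - t\<bar>"
  using assms unfolding geod_def by auto

lemma geod_rev:
  assumes G: "geod M d g l" shows "geod M d (\<lambda>t. g (l - t)) l"
proof -
  have 1: "g (l - t) \<in> M" if "t \<in> {0..l}" for t
  proof -
    have "0 \<le> l - t" "l - t \<le> l" using that by auto
    then show ?thesis using geodD(1)[OF G] by blast
  qed
  have 2: "d (g (l - s)) (g (l - t)) = \<bar>s - t\<bar>" if "s \<in> {0..l}" "t \<in> {0..l}" for s t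
  proof -
    have "0 \<le> l - s" "l - s \<le> l" "0 \<le> l - t" "l - t \<le> l" using that by auto
    then have "d (g (l - s)) (g (l - t)) = \<bar>(l - s) - (l - t)\<bar>" by (rule geodD(2)[OF G])
    then show ?thesis by simp
  qed
  have 3: "(\<lambda>t. g (l - t)) ` {0..l} \<subseteq> M" using 1 by blast
  show ?thesis unfolding geod_def using 3 2 by blast
qed


lemma ball_g:
  assumes C: "contracting M d K A" and G: "geod M d g l" and s: "0 \<le> s" "s \<le> l" and t: "0 \<le> t" "t \<le> l"
    and r: "\<bar>s - t\<bar> \<le> setdist d (g s) A - K"
    and p: "p \<in> proj d A (g s) \<union> proj d A (g t)" and q: "q \<in> proj d A (g s) \<union> proj d A (g t)"
  shows "d p q \<le> K"
proof -
  have "d (g s) (g t) \<le> setdist d (g s) A - K" using geodD(2)[OF G s t] r by simp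
  then show ?thesis using contr_ball[OF C geodD(1)[OF G s s] geodD(1)[OF G t t] _ p q] by blast
qed

lemma hop:
  assumes MS: "Metric_space M d" and C: "contracting M d K A" and AM: "A \<subseteq> M" and K: "K > 0"
    and G: "geod M d g l" and t1: "0 \<le> t1" "t1 \<le> l"
    and far: "\<And>t. 0 \<le> t \<Longrightarrow> t < t1 \<Longrightarrow> setdist d (g t) A > 2*K"
    and t: "0 \<le> t" "t \<le> t1" and pq: "p \<in> proj d A (g t)" "q \<in> proj d A (g t1)"
  shows "d p q \<le> (setdist d (g t1) A + t1) - (setdist d (g t) A + t) + 2*K"
proof -
  define m where "m t = setdist d (g t) A" for t
  have gM: "g s \<in> M" if "0 \<le> s" "s \<le> l" for s using geodD(1)[OF G that that] .
  have Ane: "A \<noteq> {}" using contr_Ane[OF C gM[OF t1]] .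
  have lip: "m s \<le> \<bar>s - u\<bar> + m u" if "0 \<le> s" "s \<le> l" "0 \<le> u" "u \<le> l" for s u
    using setdist_lip[OF MS AM Ane gM[OF that(1,2)] gM[OF that(3,4)]] geodD(2)[OF G that] unfolding m_def by simp
  have pM: "p \<in> M" if "p \<in> proj d A z" for p z using AM proj_D(1)[OF that] by (rule subsetD)
  have diam1: "d p q \<le> 2*K" if "p \<in> proj d A (g t1)" "q \<in> proj d A (g t1)" for p q
    using proj_diam[OF MS C AM gM[OF t1] that] .
  have main: "\<And>t p q. 0 \<le> t \<Longrightarrow> t \<le> t1 \<Longrightarrow> t1 - t \<le> real n * K \<Longrightarrow> p \<in> proj d A (g t) \<Longrightarrow>
     q \<in> proj d A (g t1) \<Longrightarrow> d p q \<le> (m t1 + t1) - (m t + t) + 2*K" for n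
  proof (induction n)
    case 0
    then have "t = t1" by simp
    then show ?case using diam1 0 by simp
  next
    case (Suc n)
    note P = Suc.prems
    show ?case
    proof (cases "t = t1")
      case True
      then show ?thesis using diam1 P by simp
    next
      case False
      then have tlt: "t < t1" using P by simp
      have tl: "t \<le> l" using P t1 by simp
      have mt: "m t > 2*K" using far[OF P(1) tlt] unfolding m_def .
      show ?thesis
      proof (cases "t1 - t \<le> m t - K")
        case True
        have ab1: "\<bar>t - t1\<bar> \<le> setdist d (g t) A - K" using True tlt unfolding m_def by simp
        have "d p q \<le> K" using ball_g[OF C G P(1) tl t1 ab1] P by blast
        moreover have "m t \<le> \<bar>t - t1\<bar> + m t1" using lip[OF P(1) tl t1] .
        ultimately show ?thesis using K tlt by simp
      next
        case False
        define t' where "t' = t + m t - K"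
        have t'1: "t < t'" "t' < t1" "t' - t > K" using False mt K unfolding t'_def by auto
        have t'0: "0 \<le> t'" "t' \<le> l" using t'1 P t1 by auto
        obtain p' where p': "p' \<in> proj d A (g t')" using contr_ne[OF C gM[OF t'0]] by blast
        have t'n: "t1 - t' \<le> real n * K" using t'1 P(3) by (simp add: algebra_simps)
        have IH: "d p' q \<le> (m t1 + t1) - (m t' + t') + 2*K"
          using Suc.IH[OF t'0(1) _ t'n p' P(5)] t'1 by simp
        have ab2: "\<bar>t - t'\<bar> \<le> setdist d (g t) A - K" using t'1 unfolding t'_def m_def by simp
        have pp': "d p p' \<le> K" using ball_g[OF C G P(1) tl t'0 ab2] P p' by blast
        have mt': "m t' > 2*K" using far[OF t'0(1) t'1(2)] unfolding m_def .
        have "d p q \<le> d p p' + d p' q" using Metric_space.triangle[OF MS pM[OF P(4)] pM[OF p'] pM[OF P(5)]] .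
        then show ?thesis using IH pp' mt' unfolding t'_def by linarith
      qed
    qed
  qed
  have "t1 - t \<le> real (nat \<lceil>(t1 - t) / K\<rceil>) * K"
  proof -
    have "(t1 - t) / K \<le> real (nat \<lceil>(t1 - t) / K\<rceil>)" by linarith
    then show ?thesis using K by (simp add: divide_le_eq)
  qed
  from main[OF t this pq] show ?thesis unfolding m_def .
qed

lemma farF:
  assumes MS: "Metric_space M d" and C: "contracting M d K A" and AM: "A \<subseteq> M" and K: "K > 0"
    and G: "geod M d g l"
    and far: "\<And>t. 0 \<le> t \<Longrightarrow> t \<le> l \<Longrightarrow> setdist d (g t) A > 2*K"
    and t: "0 \<le> t1" "t1 \<le> t2" "t2 \<le> l" and pq: "p \<in> proj d A (g t1)" "q \<in> proj d A (g t2)"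
  shows "d p q \<le> max (2*K) ((t2 - t1) - setdist d (g t1) A - setdist d (g t2) A + 6*K)"
proof -
  define m where "m t = setdist d (g t) A" for t
  have gM: "g s \<in> M" if "0 \<le> s" "s \<le> l" for s using geodD(1)[OF G that that] .
  have pM: "p \<in> M" if "p \<in> proj d A z" for p z using AM proj_D(1)[OF that] by (rule subsetD)
  have farm: "m t > 2*K" if "0 \<le> t" "t \<le> l" for t using far[OF that] unfolding m_def .
  have Wcase: "d p q \<le> 2*K" if W: "t2 - t1 \<le> m t1 + m t2 - 2*K" and tt: "0 \<le> t1" "t1 \<le> t2" "t2 \<le> l"
     and pq: "p \<in> proj d A (g t1)" "q \<in> proj d A (g t2)" for t1 t2 p q
  proof -
    define t where "t = max t1 (t2 - m t2 + K)"
    have t1l: "t1 \<le> l" "0 \<le> t2" using tt by auto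
    have m2: "m t2 > 2*K" using farm[OF t1l(2) tt(3)] .
    have m1: "m t1 > 2*K" using farm[OF tt(1) t1l(1)] .
    have tt': "t1 \<le> t" "t \<le> t2" "t - t1 \<le> m t1 - K" "t2 - t \<le> m t2 - K" using W m1 m2 K tt unfolding t_def by auto
    have t0: "0 \<le> t" "t \<le> l" using tt tt' by auto
    obtain w where w: "w \<in> proj d A (g t)" using contr_ne[OF C gM[OF t0]] by blast
    have a1: "\<bar>t1 - t\<bar> \<le> setdist d (g t1) A - K" using tt' unfolding m_def by simp
    have a2: "\<bar>t2 - t\<bar> \<le> setdist d (g t2) A - K" using tt' unfolding m_def by simp
    have "d p w \<le> K" using ball_g[OF C G tt(1) t1l(1) t0 a1] pq w by blast
    moreover have "d w q \<le> K" using ball_g[OF C G t1l(2) tt(3) t0 a2] pq w by blast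
    moreover have "d p q \<le> d p w + d w q" using Metric_space.triangle[OF MS pM[OF pq(1)] pM[OF w] pM[OF pq(2)]] .
    ultimately show ?thesis by linarith
  qed
  have main: "\<And>t1 t2 p q. 0 \<le> t1 \<Longrightarrow> t1 \<le> t2 \<Longrightarrow> t2 \<le> l \<Longrightarrow> t2 - t1 \<le> real n * K \<Longrightarrow>
     p \<in> proj d A (g t1) \<Longrightarrow> q \<in> proj d A (g t2) \<Longrightarrow>
     d p q \<le> max (2*K) ((t2 - t1) - m t1 - m t2 + 6*K)" for n
  proof (induction n)
    case 0
    then have e: "t1 = t2" by simp
    have "m t1 > 2*K" using farm 0 by simp
    then have "t2 - t1 \<le> m t1 + m t2 - 2*K" using e K by simp
    then have "d p q \<le> 2*K" using Wcase[OF _ 0(1,2,3,5,6)] by blast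
    then show ?case by simp
  next
    case (Suc n)
    note P = Suc.prems
    show ?case
    proof (cases "t2 - t1 \<le> m t1 + m t2 - 2*K")
      case True
      then have "d p q \<le> 2*K" using Wcase[OF _ P(1,2,3,5,6)] by blast
      then show ?thesis by simp
    next
      case False
      have t1l: "t1 \<le> l" "0 \<le> t2" using P by auto
      have m2: "m t2 > 2*K" using farm[OF t1l(2) P(3)] .
      have m1: "m t1 > 2*K" using farm[OF P(1) t1l(1)] .
      define u where "u = t1 + m t1 - K"
      define v where "v = t2 - m t2 + K"
      have uv: "t1 < u" "u < v" "v < t2" "v - u < t2 - t1 - 2*K" using False m1 m2 K unfolding u_def v_def by auto
      have uv0: "0 \<le> u" "u \<le> l" "0 \<le> v" "v \<le> l" using uv P by auto
      obtain p' where p': "p' \<in> proj d A (g u)" using contr_ne[OF C gM[OF uv0(1,2)]] by blast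
      obtain q' where q': "q' \<in> proj d A (g v)" using contr_ne[OF C gM[OF uv0(3,4)]] by blast
      have uvn: "v - u \<le> real n * K" using uv P(4) K by (simp add: algebra_simps)
      have IH: "d p' q' \<le> max (2*K) ((v - u) - m u - m v + 6*K)"
        using Suc.IH[OF uv0(1) _ uv0(4) uvn p' q'] uv by simp
      have a1: "\<bar>t1 - u\<bar> \<le> setdist d (g t1) A - K" using uv unfolding u_def m_def by simp
      have a2: "\<bar>t2 - v\<bar> \<le> setdist d (g t2) A - K" using uv unfolding v_def m_def by simp
      have pp': "d p p' \<le> K" using ball_g[OF C G P(1) t1l(1) uv0(1,2) a1] P p' by blast
      have qq': "d q' q \<le> K" using ball_g[OF C G t1l(2) P(3) uv0(3,4) a2] P q' by blast
      have mu: "m u > 2*K" using farm[OF uv0(1,2)] .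
      have mv: "m v > 2*K" using farm[OF uv0(3,4)] .
      have tr1: "d p q \<le> d p p' + d p' q" using Metric_space.triangle[OF MS pM[OF P(5)] pM[OF p'] pM[OF P(6)]] .
      have tr2: "d p' q \<le> d p' q' + d q' q" using Metric_space.triangle[OF MS pM[OF p'] pM[OF q'] pM[OF P(6)]] .
      have "d p' q' \<le> 2*K \<or> d p' q' \<le> (v - u) - m u - m v + 6*K" using IH by (simp add: le_max_iff_disj)
      then have "d p q \<le> (t2 - t1) - m t1 - m t2 + 6*K"
      proof
        assume "d p' q' \<le> 2*K"
        then show ?thesis using tr1 tr2 pp' qq' False by linarith
      next
        assume "d p' q' \<le> (v - u) - m u - m v + 6*K"
        then show ?thesis using tr1 tr2 pp' qq' mu mv unfolding u_def v_def by linarith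
      qed
      then show ?thesis by simp
    qed
  qed
  have "t2 - t1 \<le> real (nat \<lceil>(t2 - t1) / K\<rceil>) * K"
  proof -
    have "(t2 - t1) / K \<le> real (nat \<lceil>(t2 - t1) / K\<rceil>)" by linarith
    then show ?thesis using K by (simp add: divide_le_eq)
  qed
  from main[OF t this pq] show ?thesis unfolding m_def .
qed

lemma lemA_geod:
  assumes MS: "Metric_space M d" and C: "contracting M d K A" and AM: "A \<subseteq> M" and K: "K > 0"
    and G: "geod M d g l" and l: "0 \<le> l" and ab: "a \<in> proj d A (g 0)" "b \<in> proj d A (g l)"
  shows "d a b \<le> max (2*K) (l - setdist d (g 0) A - setdist d (g l) A + 12*K)"
proof -
  define m where "m t = setdist d (g t) A" for t
  have gM: "g s \<in> M" if "0 \<le> s" "s \<le> l" for s using geodD(1)[OF G that that] .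
  have pM: "p \<in> M" if "p \<in> proj d A z" for p z using AM proj_D(1)[OF that] by (rule subsetD)
  have Ane: "A \<noteq> {}" using contr_Ane[OF C gM[OF l(1) order.refl]] .
  have lip: "m s \<le> \<bar>s - u\<bar> + m u" if "0 \<le> s" "s \<le> l" "0 \<le> u" "u \<le> l" for s u
    using setdist_lip[OF MS AM Ane gM[OF that(1,2)] gM[OF that(3,4)]] geodD(2)[OF G that] unfolding m_def by simp
  show ?thesis
  proof (cases "\<exists>t. 0 \<le> t \<and> t \<le> l \<and> m t \<le> 2*K")
    case False
    then have far: "\<And>t. 0 \<le> t \<Longrightarrow> t \<le> l \<Longrightarrow> setdist d (g t) A > 2*K" unfolding m_def by force
    have "d a b \<le> max (2*K) ((l - 0) - setdist d (g 0) A - setdist d (g l) A + 6*K)"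
      by (rule farF[OF MS C AM K G far _ _ _ ab]) (use l in auto)
    then show ?thesis using K by (simp add: max_def split: if_splits)
  next
    case True
    define S where "S = {t. 0 \<le> t \<and> t \<le> l \<and> m t \<le> 2*K}"
    have Sne: "S \<noteq> {}" using True unfolding S_def by auto
    have bb: "bdd_below S" "bdd_above S" unfolding S_def by (auto intro!: bdd_belowI[where m=0] bdd_aboveI[where M=l])
    define t1 where "t1 = Inf S"
    define t2 where "t2 = Sup S"
    have t1S: "t1 \<le> t" if "t \<in> S" for t unfolding t1_def using cInf_lower[OF that bb(1)] .
    have t2S: "t \<le> t2" if "t \<in> S" for t unfolding t2_def using cSup_upper[OF that bb(2)] .
    have t1r: "0 \<le> t1" unfolding t1_def by (rule cInf_greatest[OF Sne]) (auto simp: S_def)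
    have t2r: "t2 \<le> l" unfolding t2_def by (rule cSup_least[OF Sne]) (auto simp: S_def)
    have t12: "t1 \<le> t2" unfolding t1_def t2_def by (rule cInf_le_cSup[OF Sne bb(2,1)])
    have t1l: "t1 \<le> l" using t12 t2r by simp
    have t20: "0 \<le> t2" using t12 t1r by simp
    have mt1: "m t1 \<le> 2*K"
    proof (rule field_le_epsilon)
      fix e :: real assume e: "0 < e"
      have "Inf S < t1 + e" using e unfolding t1_def by simp
      then obtain s where s: "s \<in> S" "s < t1 + e" using cInf_less_iff[OF Sne bb(1)] by auto
      have "m t1 \<le> \<bar>t1 - s\<bar> + m s" using lip[of t1 s] s t1r t1l unfolding S_def by auto
      moreover have "t1 \<le> s" using t1S[OF s(1)] .
      ultimately show "m t1 \<le> 2*K + e" using s unfolding S_def by auto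
    qed
    have mt2: "m t2 \<le> 2*K"
    proof (rule field_le_epsilon)
      fix e :: real assume e: "0 < e"
      have "t2 - e < Sup S" using e unfolding t2_def by simp
      then obtain s where s: "s \<in> S" "t2 - e < s" using less_cSup_iff[OF Sne bb(2)] by auto
      have "m t2 \<le> \<bar>t2 - s\<bar> + m s" using lip[of t2 s] s t20 t2r unfolding S_def by auto
      moreover have "s \<le> t2" using t2S[OF s(1)] .
      ultimately show "m t2 \<le> 2*K + e" using s unfolding S_def by auto
    qed
    have far1: "setdist d (g t) A > 2*K" if "0 \<le> t" "t < t1" for t
    proof (rule ccontr)
      assume "\<not> ?thesis"
      then have "t \<in> S" using that t1l unfolding S_def m_def by auto
      then show False using t1S that by force
    qed
    have far2: "setdist d ((\<lambda>t. g (l - t)) t) A > 2*K" if "0 \<le> t" "t < l - t2" for t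
    proof (rule ccontr)
      assume "\<not> ?thesis"
      then have "l - t \<in> S" using that t20 unfolding S_def m_def by auto
      then show False using t2S that by force
    qed
    obtain p1 where p1: "p1 \<in> proj d A (g t1)" using contr_ne[OF C gM[OF t1r t1l]] by blast
    obtain p2 where p2: "p2 \<in> proj d A (g t2)" using contr_ne[OF C gM[OF t20 t2r]] by blast
    have h1: "d a p1 \<le> (m t1 + t1) - (m 0 + 0) + 2*K"
      using hop[OF MS C AM K G t1r t1l far1 order.refl t1r ab(1) p1] unfolding m_def by simp
    have G': "geod M d (\<lambda>t. g (l - t)) l" by (rule geod_rev[OF G])
    have p2': "p2 \<in> proj d A ((\<lambda>t. g (l - t)) (l - t2))" using p2 by simp
    have b': "b \<in> proj d A ((\<lambda>t. g (l - t)) 0)" using ab(2) by simp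
    have h2: "d b p2 \<le> (m t2 + (l - t2)) - (m l + 0) + 2*K"
      using hop[OF MS C AM K G' _ _ far2 order.refl _ b' p2'] t2r t20 unfolding m_def by simp
    have "d p1 p2 \<le> d p1 (g t1) + d (g t1) p2"
      using Metric_space.triangle[OF MS pM[OF p1] gM[OF t1r t1l] pM[OF p2]] .
    moreover have "d (g t1) p2 \<le> d (g t1) (g t2) + d (g t2) p2"
      using Metric_space.triangle[OF MS gM[OF t1r t1l] gM[OF t20 t2r] pM[OF p2]] .
    moreover have "d (g t1) (g t2) = t2 - t1" using geodD(2)[OF G t1r t1l t20 t2r] t12 by simp
    moreover have "d p1 (g t1) = m t1" using proj_D(2)[OF p1] Metric_space.commute[OF MS] unfolding m_def by simp
    moreover have "d (g t2) p2 = m t2" using proj_D(2)[OF p2] unfolding m_def by simp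
    ultimately have h3: "d p1 p2 \<le> m t1 + (t2 - t1) + m t2" by linarith
    have "d a b \<le> d a p1 + d p1 b"
      using Metric_space.triangle[OF MS pM[OF ab(1)] pM[OF p1] pM[OF ab(2)]] .
    moreover have "d p1 b \<le> d p1 p2 + d p2 b"
      using Metric_space.triangle[OF MS pM[OF p1] pM[OF p2] pM[OF ab(2)]] .
    moreover have "d p2 b = d b p2" using Metric_space.commute[OF MS] by simp
    ultimately have "d a b \<le> l - m 0 - m l + 12*K" using h1 h2 h3 mt1 mt2 by linarith
    then show ?thesis unfolding m_def by simp
  qed
qed

lemma lemA:
  assumes GS: "geodesic_space M d" and C: "contracting M d K A" and AM: "A \<subseteq> M" and K: "K > 0"
    and xy: "x \<in> M" "y \<in> M" and ab: "a \<in> proj d A x" "b \<in> proj d A y"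
  shows "d a b \<le> max (2*K) (d x y - setdist d x A - setdist d y A + 12*K)"
proof -
  have MS: "Metric_space M d" using GS unfolding geodesic_space_def by blast
  obtain g where g: "g ` {0..d x y} \<subseteq> M" "g 0 = x" "g (d x y) = y"
    "\<forall>s\<in>{0..d x y}. \<forall>t\<in>{0..d x y}. d (g s) (g t) = \<bar>s - t\<bar>"
    using GS xy unfolding geodesic_space_def by blast
  have G: "geod M d g (d x y)" using g unfolding geod_def by blast
  show ?thesis using lemA_geod[OF MS C AM K G Metric_space.nonneg[OF MS]] ab g by simp
qed



definition chainP :: "'a set \<Rightarrow> ('a \<Rightarrow> 'a \<Rightarrow> real) \<Rightarrow> real \<Rightarrow> real \<Rightarrow> real \<Rightarrow> int set \<Rightarrow>
    (int \<Rightarrow> 'a set) \<Rightarrow> (int \<Rightarrow> 'a) \<Rightarrow> (int \<Rightarrow> 'a) \<Rightarrow> bool" where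
  "chainP M d K C Lam J A x y \<longleftrightarrow> geodesic_space M d \<and> K > 0 \<and> C > 0 \<and> consecutive_ints J \<and>
     (\<forall>i\<in>J. A i \<subseteq> M \<and> contracting M d K (A i) \<and> x i \<in> A i \<and> y i \<in> A i \<and> Lam \<le> d (x i) (y i)) \<and>
     (\<forall>i. i \<in> J \<longrightarrow> i + 1 \<in> J \<longrightarrow>
        (\<forall>z\<in>A (i+1). \<forall>w\<in>proj d (A i) z. d w (y i) < C) \<and>
        (\<forall>z\<in>A i. \<forall>w\<in>proj d (A (i+1)) z. d w (x (i+1)) < C))"

context
  fixes M d K C Lam J A x y
  assumes ch: "chainP M d K C Lam J A x y"
begin

lemma ch_GS: "geodesic_space M d" using ch unfolding chainP_def by (rule conjunct1)
lemma ch_MS: "Metric_space M d" using ch_GS unfolding geodesic_space_def by (rule conjunct1)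
lemma ch_K: "K > 0" using ch unfolding chainP_def by (elim conjE)
lemma ch_C: "C > 0" using ch unfolding chainP_def by (elim conjE)
lemma ch_cons: "consecutive_ints J" using ch unfolding chainP_def by (elim conjE)
lemma ch_i: "i \<in> J \<Longrightarrow> A i \<subseteq> M \<and> contracting M d K (A i) \<and> x i \<in> A i \<and> y i \<in> A i \<and> Lam \<le> d (x i) (y i)"
  using ch unfolding chainP_def by (elim conjE) (erule bspec)
lemma ch_AM: "i \<in> J \<Longrightarrow> A i \<subseteq> M" using ch_i by simp
lemma ch_contr: "i \<in> J \<Longrightarrow> contracting M d K (A i)" using ch_i by simp
lemma ch_x: "i \<in> J \<Longrightarrow> x i \<in> A i" using ch_i by simp
lemma ch_y: "i \<in> J \<Longrightarrow> y i \<in> A i" using ch_i by simp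
lemma ch_Lam: "i \<in> J \<Longrightarrow> Lam \<le> d (x i) (y i)" using ch_i by simp
lemma ch_al:
  assumes "i \<in> J" "i + 1 \<in> J"
  shows "(\<forall>z\<in>A (i+1). \<forall>w\<in>proj d (A i) z. d w (y i) < C) \<and>
        (\<forall>z\<in>A i. \<forall>w\<in>proj d (A (i+1)) z. d w (x (i+1)) < C)"
proof -
  have H: "\<forall>i. i \<in> J \<longrightarrow> i + 1 \<in> J \<longrightarrow>
        (\<forall>z\<in>A (i+1). \<forall>w\<in>proj d (A i) z. d w (y i) < C) \<and>
        (\<forall>z\<in>A i. \<forall>w\<in>proj d (A (i+1)) z. d w (x (i+1)) < C)"
    using ch unfolding chainP_def by (elim conjE)
  show ?thesis using mp[OF mp[OF spec[OF H, of i] assms(1)] assms(2)] .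
qed
lemma ch_al1:
  assumes "i \<in> J" "i + 1 \<in> J" "z \<in> A (i+1)" "w \<in> proj d (A i) z" shows "d w (y i) < C"
  using bspec[OF bspec[OF conjunct1[OF ch_al[OF assms(1,2)]] assms(3)] assms(4)] .
lemma ch_al2:
  assumes "i \<in> J" "i + 1 \<in> J" "z \<in> A i" "w \<in> proj d (A (i+1)) z" shows "d w (x (i+1)) < C"
  using bspec[OF bspec[OF conjunct2[OF ch_al[OF assms(1,2)]] assms(3)] assms(4)] .

lemma inM: "i \<in> J \<Longrightarrow> z \<in> A i \<Longrightarrow> z \<in> M" using ch_AM by (rule subsetD)
lemma projM: assumes "i \<in> J" "w \<in> proj d (A i) z" shows "w \<in> M"
  by (rule inM[OF assms(1) proj_D(1)[OF assms(2)]])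

lemma tri: "a \<in> M \<Longrightarrow> b \<in> M \<Longrightarrow> c \<in> M \<Longrightarrow> d a c \<le> d a b + d b c"
  using Metric_space.triangle[OF ch_MS] .
lemma com: "d a b = d b a" using Metric_space.commute[OF ch_MS] .
lemma nn: "0 \<le> d a b" using Metric_space.nonneg[OF ch_MS] .

lemma cons_between: assumes "i \<in> J" "k \<in> J" "i \<le> j" "j \<le> k" shows "j \<in> J"
proof -
  have H: "\<forall>i\<in>J. \<forall>j\<in>J. \<forall>k. i \<le> k \<and> k \<le> j \<longrightarrow> k \<in> J" using ch_cons unfolding consecutive_ints_def .
  show ?thesis using mp[OF spec[OF bspec[OF bspec[OF H assms(1)] assms(2)], of j]] assms(3,4) by simp
qed

lemma lemA_i:
  assumes "i \<in> J" "u \<in> M" "v \<in> M" "a \<in> proj d (A i) u" "b \<in> proj d (A i) v"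
  shows "d a b \<le> max (2*K) (d u v - setdist d u (A i) - setdist d v (A i) + 12*K)"
  by (rule lemA[OF ch_GS ch_contr[OF assms(1)] ch_AM[OF assms(1)] ch_K assms(2-5)])

lemma core:
  assumes i: "i \<in> J" "i + 1 \<in> J" and z: "z \<in> M" and b: "b \<in> proj d (A (i+1)) z"
    and far: "d b (x (i+1)) > C + 2*K" and w: "w \<in> proj d (A i) z"
  shows "d w (y i) \<le> 24*K + 2*C"
proof -
  have wA: "w \<in> A i" using proj_D(1)[OF w] .
  have wM: "w \<in> M" using inM[OF i(1) wA] .
  obtain a where a: "a \<in> proj d (A (i+1)) w" using contr_ne[OF ch_contr[OF i(2)] wM] .
  have aM: "a \<in> M" using projM[OF i(2) a] .
  have bM: "b \<in> M" using projM[OF i(2) b] .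
  have x1M: "x (i+1) \<in> M" using inM[OF i(2) ch_x[OF i(2)]] .
  have yM: "y i \<in> M" using inM[OF i(1) ch_y[OF i(1)]] .
  have ax: "d a (x (i+1)) < C" using ch_al2[OF i wA a] .
  have "d b (x (i+1)) \<le> d b a + d a (x (i+1))" using tri[OF bM aM x1M] .
  then have ab2: "d a b > 2*K" using far ax com[of a b] by linarith
  have LA: "d a b \<le> max (2*K) (d w z - setdist d w (A (i+1)) - setdist d z (A (i+1)) + 12*K)"
    using lemA_i[OF i(2) wM z a b] .
  have LA': "d a b \<le> d w z - setdist d w (A (i+1)) - setdist d z (A (i+1)) + 12*K"
    using LA ab2 by (simp add: le_max_iff_disj)
  have s1: "setdist d w (A (i+1)) = d w a" using proj_D(2)[OF a] by simp
  have s2: "setdist d z (A (i+1)) = d z b" using proj_D(2)[OF b] by simp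
  have "d z w = setdist d z (A i)" using proj_D(2)[OF w] .
  also have "\<dots> \<le> d z (y i)" using setdist_le[OF ch_MS ch_y[OF i(1)]] .
  also have "\<dots> \<le> d z b + d b (y i)" using tri[OF z bM yM] .
  also have "d b (y i) \<le> d b a + d a (y i)" using tri[OF bM aM yM] .
  finally have "d z w \<le> d z b + d b a + d a (y i)" by simp
  then have star: "d w a \<le> d a (y i) + 12*K" using LA' s1 s2 com[of w z] com[of a b] by linarith
  obtain c where c: "c \<in> proj d (A i) a" using contr_ne[OF ch_contr[OF i(1)] aM] .
  have cM: "c \<in> M" using projM[OF i(1) c] .
  have aA: "a \<in> A (i+1)" using proj_D(1)[OF a] .
  have cy: "d c (y i) < C" using ch_al1[OF i aA c] .
  have ww: "w \<in> proj d (A i) w" using proj_self[OF ch_MS wA ch_AM[OF i(1)]] .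
  have LB: "d c w \<le> max (2*K) (d a w - setdist d a (A i) - setdist d w (A i) + 12*K)"
    using lemA_i[OF i(1) aM wM c ww] .
  have s3: "setdist d w (A i) = 0" using setdist_self[OF ch_MS wA ch_AM[OF i(1)]] .
  have s4: "setdist d a (A i) = d a c" using proj_D(2)[OF c] by simp
  have "d a (y i) \<le> d a c + d c (y i)" using tri[OF aM cM yM] .
  then have "d a w - setdist d a (A i) - setdist d w (A i) + 12*K \<le> 24*K + C"
    using s3 s4 star cy com[of a w] com[of w a] by linarith
  then have cw: "d c w \<le> 24*K + C" using LB ch_K ch_C by (simp add: max_def split: if_splits)
  have "d w (y i) \<le> d w c + d c (y i)" using tri[OF wM cM yM] .
  then show ?thesis using cw cy com[of c w] by linarith
qed

lemma key:
  assumes Lam: "Lam > 26*K + 3*C"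
  shows "\<And>l m. l \<in> J \<Longrightarrow> m \<in> J \<Longrightarrow> m = l + 1 + int n \<Longrightarrow> z \<in> A m \<Longrightarrow> w \<in> proj d (A l) z \<Longrightarrow>
    d w (y l) \<le> 24*K + 2*C"
proof (induction n arbitrary: z w)
  case 0
  have "d w (y l) < C" using ch_al1[of l z w] 0 by simp
  then show ?case using ch_K ch_C by linarith
next
  case (Suc n)
  have l1: "l + 1 \<in> J" using cons_between[OF Suc.prems(1) Suc.prems(2)] Suc.prems(3) by simp
  have m: "m = (l + 1) + 1 + int n" using Suc.prems(3) by simp
  have zM: "z \<in> M" using inM[OF Suc.prems(2,4)] .
  obtain b where b: "b \<in> proj d (A (l+1)) z" using contr_ne[OF ch_contr[OF l1] zM] .
  have by1: "d b (y (l+1)) \<le> 24*K + 2*C" using Suc.IH[OF l1 Suc.prems(2) m Suc.prems(4) b] .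
  have bM: "b \<in> M" using projM[OF l1 b] .
  have xM: "x (l+1) \<in> M" using inM[OF l1 ch_x[OF l1]] .
  have yM: "y (l+1) \<in> M" using inM[OF l1 ch_y[OF l1]] .
  have "d (x (l+1)) (y (l+1)) \<le> d (x (l+1)) b + d b (y (l+1))" using tri[OF xM bM yM] .
  then have "d b (x (l+1)) > C + 2*K" using ch_Lam[OF l1] by1 Lam com[of b "x (l+1)"] by linarith
  then show ?case using core[OF Suc.prems(1) l1 zM b _ Suc.prems(5)] by simp
qed

lemma key2:
  assumes Lam: "Lam > 26*K + 3*C" and lm: "l \<in> J" "m \<in> J" "l < m" and z: "z \<in> A m" and w: "w \<in> proj d (A l) z"
  shows "d w (y l) \<le> 24*K + 2*C"
  using key[OF Lam lm(1,2) _ z w, of "nat (m - l - 1)"] lm by simp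

lemma growth:
  assumes i: "i \<in> J" "i + 1 \<in> J" and p: "p \<in> M" and w: "w \<in> proj d (A i) p"
    and far: "d w (y i) \<ge> 12*K + C + 1"
  shows "setdist d p (A (i+1)) \<ge> setdist d p (A i) + 1"
proof (rule setdist_greatest)
  show "A (i+1) \<noteq> {}" using ch_x[OF i(2)] by auto
next
  fix v assume v: "v \<in> A (i+1)"
  have vM: "v \<in> M" using inM[OF i(2) v] .
  obtain c where c: "c \<in> proj d (A i) v" using contr_ne[OF ch_contr[OF i(1)] vM] .
  have cy: "d c (y i) < C" using ch_al1[OF i v c] .
  have wM: "w \<in> M" using projM[OF i(1) w] .
  have cM: "c \<in> M" using projM[OF i(1) c] .
  have yM: "y i \<in> M" using inM[OF i(1) ch_y[OF i(1)]] .
  have "d w (y i) \<le> d w c + d c (y i)" using tri[OF wM cM yM] .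
  then have wc: "d w c > 2*K" using far cy ch_K by linarith
  have LA: "d w c \<le> max (2*K) (d p v - setdist d p (A i) - setdist d v (A i) + 12*K)"
    using lemA_i[OF i(1) p vM w c] .
  then have "d w c \<le> d p v - setdist d p (A i) - setdist d v (A i) + 12*K"
    using wc by (simp add: le_max_iff_disj)
  moreover have "setdist d v (A i) \<ge> 0" using setdist_nonneg[OF ch_MS] ch_x[OF i(1)] by blast
  moreover have "d w c \<ge> 12*K + 1" using \<open>d w (y i) \<le> d w c + d c (y i)\<close> far cy by linarith
  ultimately show "setdist d p (A i) + 1 \<le> d p v" by linarith
qed

end

lemma neg_mem: assumes "i \<in> uminus ` (J::int set)" shows "-i \<in> J"
  using assms by (rule imageE) simp

lemma chain_mirror:
  assumes ch: "chainP M d K C Lam J A x y"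
  shows "chainP M d K C Lam (uminus ` J) (\<lambda>i. A (-i)) (\<lambda>i. y (-i)) (\<lambda>i. x (-i))"
proof -
  have cons: "consecutive_ints (uminus ` J)"
    unfolding consecutive_ints_def
  proof (intro ballI allI impI)
    fix i j k assume i: "i \<in> uminus ` J" and j: "j \<in> uminus ` J" and k: "i \<le> k \<and> k \<le> j"
    have "-k \<in> J" using cons_between[OF ch neg_mem[OF j] neg_mem[OF i], of "-k"] k by simp
    then show "k \<in> uminus ` J" by (rule rev_image_eqI) simp
  qed
  have i: "\<forall>i\<in>uminus ` J. A (-i) \<subseteq> M \<and> contracting M d K (A (-i)) \<and> y (-i) \<in> A (-i) \<and> x (-i) \<in> A (-i)
      \<and> Lam \<le> d (y (-i)) (x (-i))"
  proof
    fix i assume "i \<in> uminus ` J"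
    then have "-i \<in> J" by (rule neg_mem)
    then show "A (-i) \<subseteq> M \<and> contracting M d K (A (-i)) \<and> y (-i) \<in> A (-i) \<and> x (-i) \<in> A (-i)
      \<and> Lam \<le> d (y (-i)) (x (-i))" using ch_i[OF ch] com[OF ch, of "y (-i)" "x (-i)"] by simp
  qed
  have al: "\<forall>i. i \<in> uminus ` J \<longrightarrow> i + 1 \<in> uminus ` J \<longrightarrow>
        (\<forall>z\<in>A (-(i+1)). \<forall>w\<in>proj d (A (-i)) z. d w (x (-i)) < C) \<and>
        (\<forall>z\<in>A (-i). \<forall>w\<in>proj d (A (-(i+1))) z. d w (y (-(i+1))) < C)"
  proof (intro allI impI)
    fix i assume i1: "i \<in> uminus ` J" and i2: "i + 1 \<in> uminus ` J"
    have k1: "-(i+1) \<in> J" using neg_mem[OF i2] .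
    have k2: "-(i+1) + 1 \<in> J" using neg_mem[OF i1] by simp
    have e: "-(i+1) + 1 = -i" by simp
    show "(\<forall>z\<in>A (-(i+1)). \<forall>w\<in>proj d (A (-i)) z. d w (x (-i)) < C) \<and>
        (\<forall>z\<in>A (-i). \<forall>w\<in>proj d (A (-(i+1))) z. d w (y (-(i+1))) < C)"
      using ch_al[OF ch k1 k2] unfolding e by simp
  qed
  have G: "geodesic_space M d" "K > 0" "C > 0" using ch_GS[OF ch] ch_K[OF ch] ch_C[OF ch] by simp_all
  show ?thesis unfolding chainP_def using G cons i al by simp
qed



lemma comb:
  fixes J :: "int set" and Ra La :: "int \<Rightarrow> bool" and h :: "int \<Rightarrow> real"
  assumes Jne: "J \<noteq> {}" and cons: "consecutive_ints J" and hnn: "\<And>i. i \<in> J \<Longrightarrow> h i \<ge> 0"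
    and RL: "\<And>i. i \<in> J \<Longrightarrow> \<not> (Ra i \<and> La i)"
    and pr: "\<And>i. i \<in> J \<Longrightarrow> i + 1 \<in> J \<Longrightarrow> Ra i \<or> La (i+1)"
    and gr: "\<And>i. i \<in> J \<Longrightarrow> i + 1 \<in> J \<Longrightarrow> \<not> Ra i \<Longrightarrow> h (i+1) \<ge> h i + 1"
    and gl: "\<And>i. i \<in> J \<Longrightarrow> i + 1 \<in> J \<Longrightarrow> \<not> La (i+1) \<Longrightarrow> h i \<ge> h (i+1) + 1"
  defines "J0 \<equiv> {j \<in> J. (\<forall>i\<in>J. i < j \<longrightarrow> Ra i) \<and> (\<forall>i\<in>J. i > j \<longrightarrow> La i)}"
  shows "\<exists>j\<in>J. (\<forall>i\<in>J. h j \<le> h i) \<and> (\<forall>k\<in>J. (\<forall>i\<in>J. h k \<le> h i) \<longrightarrow> k \<in> J0) \<and>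
          (J0 = {j} \<or> J0 = {j, j+1} \<or> J0 = {j - 1, j})"
proof -
  have betw: "j \<in> J" if "i \<in> J" "k \<in> J" "i \<le> j" "j \<le> k" for i j k
    using cons that unfolding consecutive_ints_def by blast
  have C1: "\<And>k. k = i + int n \<Longrightarrow> i \<in> J \<Longrightarrow> k \<in> J \<Longrightarrow> La i \<Longrightarrow> La k" for n i
  proof (induction n)
    case 0 then show ?case by simp
  next
    case (Suc n)
    have k1: "k - 1 \<in> J" using betw[OF Suc.prems(2) Suc.prems(3), of "k - 1"] Suc.prems(1) by simp
    have "La (k - 1)" using Suc.IH[OF _ Suc.prems(2) k1 Suc.prems(4)] Suc.prems(1) by simp
    then have "\<not> Ra (k - 1)" using RL[OF k1] by simp
    then show ?case using pr[OF k1] Suc.prems(3) by simp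
  qed
  have La_up: "La k" if "i \<in> J" "k \<in> J" "i \<le> k" "La i" for i k
    using C1[of k i "nat (k - i)"] that by simp
  have C2: "\<And>i. i = k - int n \<Longrightarrow> i \<in> J \<Longrightarrow> k \<in> J \<Longrightarrow> Ra k \<Longrightarrow> Ra i" for n k
  proof (induction n)
    case 0 then show ?case by simp
  next
    case (Suc n)
    have i1: "i + 1 \<in> J" using betw[OF Suc.prems(2) Suc.prems(3), of "i + 1"] Suc.prems(1) by simp
    have "Ra (i + 1)" using Suc.IH[OF _ i1 Suc.prems(3) Suc.prems(4)] Suc.prems(1) by simp
    then have "\<not> La (i + 1)" using RL[OF i1] by simp
    then show ?case using pr[OF Suc.prems(2) i1] by simp
  qed
  have Ra_down: "Ra i" if "i \<in> J" "k \<in> J" "i \<le> k" "Ra k" for i k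
    using C2[of i k "nat (k - i)"] that by simp
  have C3: "\<And>k. k = i + int n \<Longrightarrow> i \<in> J \<Longrightarrow> k \<in> J \<Longrightarrow> (\<forall>j. i \<le> j \<and> j < k \<and> j \<in> J \<longrightarrow> \<not> Ra j) \<Longrightarrow>
      h k \<ge> h i + real_of_int (k - i)" for n i
  proof (induction n)
    case 0 then show ?case by simp
  next
    case (Suc n)
    have k1: "k - 1 \<in> J" using betw[OF Suc.prems(2) Suc.prems(3), of "k - 1"] Suc.prems(1) by simp
    have IH: "h (k - 1) \<ge> h i + real_of_int (k - 1 - i)"
      using Suc.IH[OF _ Suc.prems(2) k1] Suc.prems(1,4) by simp
    have "\<not> Ra (k - 1)" using Suc.prems(1,4) k1 by simp
    then have "h (k - 1 + 1) \<ge> h (k - 1) + 1" using gr[OF k1] Suc.prems(3) by simp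
    then show ?case using IH by simp
  qed
  have C4: "\<And>i. i = k - int n \<Longrightarrow> i \<in> J \<Longrightarrow> k \<in> J \<Longrightarrow> (\<forall>j. i < j \<and> j \<le> k \<and> j \<in> J \<longrightarrow> \<not> La j) \<Longrightarrow>
      h i \<ge> h k + real_of_int (k - i)" for n k
  proof (induction n)
    case 0 then show ?case by simp
  next
    case (Suc n)
    have i1: "i + 1 \<in> J" using betw[OF Suc.prems(2) Suc.prems(3), of "i + 1"] Suc.prems(1) by simp
    have IH: "h (i + 1) \<ge> h k + real_of_int (k - (i + 1))"
      using Suc.IH[OF _ i1 Suc.prems(3)] Suc.prems(1,4) by simp
    have "\<not> La (i + 1)" using Suc.prems(1,4) i1 by simp
    then have "h i \<ge> h (i + 1) + 1" using gl[OF Suc.prems(2) i1] by simp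
    then show ?case using IH by simp
  qed
  have C5: "\<And>i. k = i + int n \<Longrightarrow> i \<in> J \<Longrightarrow> k \<in> J \<Longrightarrow> h i + h k \<ge> real_of_int (k - i) - 1" for n k
  proof (induction n)
    case 0 then show ?case using hnn[OF 0(2)] by simp
  next
    case (Suc n)
    have i1: "i + 1 \<in> J" using betw[OF Suc.prems(2) Suc.prems(3), of "i + 1"] Suc.prems(1) by simp
    show ?case
    proof (cases "La (i + 1)")
      case False
      have "h i \<ge> h (i + 1) + 1" using gl[OF Suc.prems(2) i1 False] .
      moreover have "h (i + 1) + h k \<ge> real_of_int (k - (i + 1)) - 1"
        using Suc.IH[OF _ i1 Suc.prems(3)] Suc.prems(1) by simp
      ultimately show ?thesis by simp
    next
      case True
      have "\<forall>j. i + 1 \<le> j \<and> j < k \<and> j \<in> J \<longrightarrow> \<not> Ra j"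
      proof (intro allI impI)
        fix j assume j: "i + 1 \<le> j \<and> j < k \<and> j \<in> J"
        then have "La j" using La_up[OF i1 _ _ True] by simp
        then show "\<not> Ra j" using RL j by blast
      qed
      then have "h k \<ge> h (i + 1) + real_of_int (k - (i + 1))"
        using C3[of k "i + 1" n] i1 Suc.prems by simp
      then show ?thesis using hnn[OF i1] hnn[OF Suc.prems(2)] by simp
    qed
  qed
  have C5': "h i + h k \<ge> real_of_int (k - i) - 1" if "i \<in> J" "k \<in> J" "i \<le> k" for i k
    using C5[of k i "nat (k - i)"] that by simp
  obtain i0 where i0: "i0 \<in> J" using Jne by blast
  define N where "N = \<lceil>2 * h i0\<rceil> + 1"
  define S where "S = {i \<in> J. h i \<le> h i0}"
  have SN: "S \<subseteq> {i0 - N .. i0 + N}"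
  proof
    fix i assume iS: "i \<in> S"
    then have iJ: "i \<in> J" and hi: "h i \<le> h i0" unfolding S_def by auto
    have "\<bar>i - i0\<bar> \<le> N"
    proof (cases "i \<le> i0")
      case True
      have "h i + h i0 \<ge> real_of_int (i0 - i) - 1" using C5'[OF iJ i0 True] .
      then have "real_of_int (i0 - i) \<le> 2 * h i0 + 1" using hi by simp
      then have "i0 - i \<le> N" unfolding N_def by linarith
      then show ?thesis using True by simp
    next
      case False
      have "h i0 + h i \<ge> real_of_int (i - i0) - 1" using C5'[OF i0 iJ] False by simp
      then have "real_of_int (i - i0) \<le> 2 * h i0 + 1" using hi by simp
      then have "i - i0 \<le> N" unfolding N_def by linarith
      then show ?thesis using False by simp
    qed
    then show "i \<in> {i0 - N .. i0 + N}" by (simp add: abs_le_iff; linarith)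
  qed
  have finS: "finite S" using finite_subset[OF SN] by simp
  have i0S: "i0 \<in> S" using i0 unfolding S_def by simp
  have "Min (h ` S) \<in> h ` S" using finS i0S by (intro Min_in) auto
  then obtain j where jS: "j \<in> S" and hj: "h j = Min (h ` S)" by auto
  have jmin: "\<forall>i\<in>J. h j \<le> h i"
  proof
    fix i assume iJ: "i \<in> J"
    show "h j \<le> h i"
    proof (cases "i \<in> S")
      case True
      then show ?thesis unfolding hj using finS by (intro Min_le) auto
    next
      case False
      then have "h i > h i0" using iJ unfolding S_def by auto
      moreover have "h j \<le> h i0" using jS unfolding S_def by simp
      ultimately show ?thesis by simp
    qed
  qed
  have jJ: "j \<in> J" using jS unfolding S_def by simp
  have minJ0: "k \<in> J0" if kJ: "k \<in> J" and kmin: "\<forall>i\<in>J. h k \<le> h i" for k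
  proof -
    have "Ra i" if iJ: "i \<in> J" and ik: "i < k" for i
    proof (rule ccontr)
      assume nR: "\<not> Ra i"
      have "\<forall>l. i \<le> l \<and> l < k \<and> l \<in> J \<longrightarrow> \<not> Ra l"
        using Ra_down[OF iJ] nR by blast
      then have "h k \<ge> h i + real_of_int (k - i)" using C3[of k i "nat (k - i)"] iJ kJ ik by simp
      then show False using kmin iJ ik by force
    qed
    moreover have "La i" if iJ: "i \<in> J" and ik: "i > k" for i
    proof (rule ccontr)
      assume nL: "\<not> La i"
      have "\<forall>l. k < l \<and> l \<le> i \<and> l \<in> J \<longrightarrow> \<not> La l"
        using La_up[OF _ iJ] nL by blast
      then have "h k \<ge> h i + real_of_int (i - k)" using C4[of k i "nat (i - k)"] iJ kJ ik by simp
      then show False using kmin iJ ik by force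
    qed
    ultimately show ?thesis using kJ unfolding J0_def by blast
  qed
  have jJ0: "j \<in> J0" using minJ0[OF jJ jmin] .
  have pair: "l = k + 1" if "k \<in> J0" "l \<in> J0" "k < l" for k l
  proof (rule ccontr)
    assume "l \<noteq> k + 1"
    then have kl: "k + 1 < l" using that by simp
    have kJ: "k \<in> J" and lJ: "l \<in> J" using that unfolding J0_def by auto
    have mJ: "k + 1 \<in> J" using betw[OF kJ lJ, of "k+1"] kl by simp
    have "Ra (k + 1)" using that(2) mJ kl unfolding J0_def by simp
    moreover have "La (k + 1)" using that(1) mJ unfolding J0_def by simp
    ultimately show False using RL[OF mJ] by simp
  qed
  have sub: "J0 \<subseteq> {j - 1, j, j + 1}"
  proof
    fix k assume k: "k \<in> J0"
    have "k = j - 1 \<or> k = j \<or> k = j + 1"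
    proof (cases "k < j")
      case True then show ?thesis using pair[OF k jJ0] by simp
    next
      case False
      then show ?thesis using pair[OF jJ0 k] by (cases "k = j") auto
    qed
    then show "k \<in> {j - 1, j, j + 1}" by simp
  qed
  have notboth: "\<not> (j - 1 \<in> J0 \<and> j + 1 \<in> J0)" using pair[of "j - 1" "j + 1"] by auto
  have "J0 = {j} \<or> J0 = {j, j+1} \<or> J0 = {j - 1, j}"
  proof (cases "j + 1 \<in> J0")
    case True
    then have "j - 1 \<notin> J0" using notboth by simp
    then have "J0 = {j, j+1}" using sub True jJ0 by auto
    then show ?thesis by simp
  next
    case False
    show ?thesis
    proof (cases "j - 1 \<in> J0")
      case True
      then have "J0 = {j - 1, j}" using sub False jJ0 by auto
      then show ?thesis by simp
    next
      case F2: False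
      then have "J0 = {j}" using sub False jJ0 by auto
      then show ?thesis by simp
    qed
  qed
  then show ?thesis using jJ jmin minJ0 by blast
qed



lemma diam_ins:
  assumes MS: "Metric_space M d" and y: "y \<in> M" and S: "S \<subseteq> M" and B: "\<And>w. w \<in> S \<Longrightarrow> d w y \<le> B" "B \<ge> 0"
  shows "diam d (insert y S) \<le> ereal (2*B)"
proof (rule diam_le_pairs)
  fix p q assume p: "p \<in> insert y S" and q: "q \<in> insert y S"
  have dp: "d p y \<le> B" using p B d_self[OF MS y] by auto
  have dq: "d y q \<le> B" using q B d_self[OF MS y] Metric_space.commute[OF MS, of y q] by auto
  have pM: "p \<in> M" using p y S by auto
  have qM: "q \<in> M" using q y S by auto
  have "d p q \<le> d p y + d y q" using Metric_space.triangle[OF MS pM y qM] .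
  then show "d p q \<le> 2*B" using dp dq by simp
qed

lemma proj_set_single: "proj_set d A {p} = proj d A p"
  unfolding proj_set_def by simp

lemma proj_single: "proj d {p} b = {p}"
  unfolding proj_def setdist_def by auto

lemma proj_set_onto_single: "B \<noteq> {} \<Longrightarrow> proj_set d {p} B = {p}"
  unfolding proj_set_def proj_single by simp

lemma diam_single: "diam d {p} = ereal (d p p)"
  unfolding diam_def by simp

lemma align_pt_R:
  assumes MS: "Metric_space M d" and p: "p \<in> M" and B: "B \<noteq> {}" and D: "D > 0"
  shows "aligned d D (B, a, a') (point_path p) \<longleftrightarrow> diam d (insert a' (proj d B p)) < ereal D"
  unfolding aligned_def point_path_def
  using proj_set_single[of d B p] proj_set_onto_single[OF B, of d p] diam_single[of d p] d_self[OF MS p] D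
  by simp

lemma align_pt_L:
  assumes MS: "Metric_space M d" and p: "p \<in> M" and B: "B \<noteq> {}" and D: "D > 0"
  shows "aligned d D (point_path p) (B, a, a') \<longleftrightarrow> diam d (insert a (proj d B p)) < ereal D"
  unfolding aligned_def point_path_def
  using proj_set_single[of d B p] proj_set_onto_single[OF B, of d p] diam_single[of d p] d_self[OF MS p] D
  by simp

context
  fixes M d K C Lam J A x y D p
  assumes ch: "chainP M d K C Lam J A x y" and Dd: "D = 48*K + 4*C + 1" and Lam: "Lam \<ge> 3*D"
    and p: "p \<in> M" and K1: "K \<ge> 1"
begin

lemma D_pos: "D > 0" using Dd ch_K[OF ch] ch_C[OF ch] by simp

lemma st_i: "i \<in> J \<Longrightarrow> \<not> (diam d (insert (y i) (proj d (A i) p)) < ereal D \<and>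
                          diam d (insert (x i) (proj d (A i) p)) < ereal D)"
proof
  assume i: "i \<in> J" and c: "diam d (insert (y i) (proj d (A i) p)) < ereal D \<and>
                          diam d (insert (x i) (proj d (A i) p)) < ereal D"
  obtain w where w: "w \<in> proj d (A i) p" using contr_ne[OF ch_contr[OF ch i] p] .
  have "d w (y i) < D" by (rule diam_lt_D[OF conjunct1[OF c]]) (use w in auto)
  moreover have "d w (x i) < D" by (rule diam_lt_D[OF conjunct2[OF c]]) (use w in auto)
  moreover have "d (x i) (y i) \<le> d (x i) w + d w (y i)"
    using tri[OF ch inM[OF ch i ch_x[OF ch i]] projM[OF ch i w] inM[OF ch i ch_y[OF ch i]]] .
  moreover have "d (x i) w = d w (x i)" using com[OF ch] .
  ultimately show False using ch_Lam[OF ch i] Lam D_pos by linarith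
qed

lemma small_diam:
  assumes i: "i \<in> J" and z: "z \<in> M" and B: "\<And>w. w \<in> proj d (A i) p \<Longrightarrow> d w z \<le> 24*K + 2*C"
  shows "diam d (insert z (proj d (A i) p)) < ereal D"
proof -
  have "proj d (A i) p \<subseteq> M" using projM[OF ch i] by blast
  then have "diam d (insert z (proj d (A i) p)) \<le> ereal (2*(24*K + 2*C))"
    using diam_ins[OF ch_MS[OF ch] z _ B] ch_K[OF ch] ch_C[OF ch] by simp
  also have "\<dots> < ereal D" using Dd by simp
  finally show ?thesis .
qed

lemma st_ii:
  assumes i: "i \<in> J" "i + 1 \<in> J"
  shows "diam d (insert (y i) (proj d (A i) p)) < ereal D \<or> diam d (insert (x (i+1)) (proj d (A (i+1)) p)) < ereal D"
proof (cases "\<exists>b\<in>proj d (A (i+1)) p. d b (x (i+1)) > C + 2*K")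
  case True
  then obtain b where b: "b \<in> proj d (A (i+1)) p" "d b (x (i+1)) > C + 2*K" by blast
  have "diam d (insert (y i) (proj d (A i) p)) < ereal D"
    by (rule small_diam[OF i(1) inM[OF ch i(1) ch_y[OF ch i(1)]]]) (rule core[OF ch i p b])
  then show ?thesis by simp
next
  case False
  have "diam d (insert (x (i+1)) (proj d (A (i+1)) p)) < ereal D"
  proof (rule small_diam[OF i(2) inM[OF ch i(2) ch_x[OF ch i(2)]]])
    fix w assume "w \<in> proj d (A (i+1)) p"
    then have "d w (x (i+1)) \<le> C + 2*K" using False by (simp add: not_less)
    then show "d w (x (i+1)) \<le> 24*K + 2*C" using ch_K[OF ch] ch_C[OF ch] by simp
  qed
  then show ?thesis by simp
qed

lemma st_iii:
  assumes i: "i \<in> J" "i + 1 \<in> J" and nR: "\<not> diam d (insert (y i) (proj d (A i) p)) < ereal D"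
  shows "setdist d p (A (i+1)) \<ge> setdist d p (A i) + 1"
proof -
  have "\<exists>w\<in>proj d (A i) p. d w (y i) > 24*K + 2*C"
  proof (rule ccontr)
    assume "\<not> ?thesis"
    then have "diam d (insert (y i) (proj d (A i) p)) < ereal D"
      by (intro small_diam[OF i(1) inM[OF ch i(1) ch_y[OF ch i(1)]]]) (simp add: not_less)
    then show False using nR by simp
  qed
  then obtain w where w: "w \<in> proj d (A i) p" "d w (y i) > 24*K + 2*C" by blast
  have "d w (y i) \<ge> 12*K + C + 1" using w(2) K1 ch_C[OF ch] by simp
  then show ?thesis by (rule growth[OF ch i p w(1)])
qed

end

lemma st_iv:
  assumes ch: "chainP M d K C Lam J A x y" and Dd: "D = 48*K + 4*C + 1" and Lam: "Lam \<ge> 3*D"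
    and p: "p \<in> M" and K1: "K \<ge> 1" and i: "i \<in> J" "i + 1 \<in> J"
    and nL: "\<not> diam d (insert (x (i+1)) (proj d (A (i+1)) p)) < ereal D"
  shows "setdist d p (A i) \<ge> setdist d p (A (i+1)) + 1"
proof -
  have ch': "chainP M d K C Lam (uminus ` J) (\<lambda>i. A (-i)) (\<lambda>i. y (-i)) (\<lambda>i. x (-i))"
    by (rule chain_mirror[OF ch])
  have k1: "-(i+1) \<in> uminus ` J" using imageI[OF i(2), of uminus] .
  have k2: "-(i+1) + 1 \<in> uminus ` J" using i(1) by (simp add: image_iff)
  have "setdist d p ((\<lambda>i. A (-i)) (-(i+1) + 1)) \<ge> setdist d p ((\<lambda>i. A (-i)) (-(i+1))) + 1"
    by (rule st_iii[OF ch' Dd Lam p K1 k1 k2]) (use nL in \<open>simp add: add.commute\<close>)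
  then show ?thesis by (simp add: add.commute)
qed



lemma main_abstract:
  assumes ch: "chainP M d K C Lam J A x y" and Dd: "D = 48*K + 4*C + 1" and Lam: "Lam \<ge> 3*D"
    and p: "p \<in> M" and K1: "K \<ge> 1" and Jne: "J \<noteq> {}"
  defines "J0 \<equiv> {j \<in> J. (\<forall>i\<in>J. i < j \<longrightarrow> aligned d D (A i, x i, y i) (point_path p)) \<and>
                          (\<forall>i\<in>J. i > j \<longrightarrow> aligned d D (point_path p) (A i, x i, y i))}"
    and "U \<equiv> (\<Union>i\<in>J. A i)"
  shows "(\<forall>i\<in>J. \<not> (aligned d D (A i, x i, y i) (point_path p) \<and> aligned d D (point_path p) (A i, x i, y i))) \<and>
           (\<exists>j. J0 = {j} \<or> J0 = {j, j + 1}) \<and>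
           proj d U p \<noteq> {} \<and>
           proj d U p \<subseteq> (\<Union>j\<in>J0. proj d (A j) p) \<and>
           (\<forall>l\<in>J. \<forall>m\<in>J. l < m \<longrightarrow> aligned d D (A l, x l, y l) (A m, x m, y m))"
proof -
  have MS: "Metric_space M d" using ch_MS[OF ch] .
  have Dp: "D > 0" using Dd ch_K[OF ch] ch_C[OF ch] by simp
  define Ra where "Ra i \<longleftrightarrow> diam d (insert (y i) (proj d (A i) p)) < ereal D" for i
  define La where "La i \<longleftrightarrow> diam d (insert (x i) (proj d (A i) p)) < ereal D" for i
  define h where "h i = setdist d p (A i)" for i
  have Ane: "A i \<noteq> {}" if "i \<in> J" for i using ch_x[OF ch that] by auto
  have alR: "aligned d D (A i, x i, y i) (point_path p) \<longleftrightarrow> Ra i" if "i \<in> J" for i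
    unfolding Ra_def by (rule align_pt_R[OF MS p Ane[OF that] Dp])
  have alL: "aligned d D (point_path p) (A i, x i, y i) \<longleftrightarrow> La i" if "i \<in> J" for i
    unfolding La_def by (rule align_pt_L[OF MS p Ane[OF that] Dp])
  have J0eq: "J0 = {j \<in> J. (\<forall>i\<in>J. i < j \<longrightarrow> Ra i) \<and> (\<forall>i\<in>J. i > j \<longrightarrow> La i)}"
    unfolding J0_def using alR alL by auto
  have cons: "consecutive_ints J" using ch_cons[OF ch] .
  have hnn: "\<And>i. i \<in> J \<Longrightarrow> h i \<ge> 0" unfolding h_def using setdist_nonneg[OF MS Ane] by blast
  have RL: "\<And>i. i \<in> J \<Longrightarrow> \<not> (Ra i \<and> La i)" unfolding Ra_def La_def by (rule st_i[OF ch Dd Lam p K1])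
  have pr: "\<And>i. i \<in> J \<Longrightarrow> i + 1 \<in> J \<Longrightarrow> Ra i \<or> La (i+1)" unfolding Ra_def La_def by (rule st_ii[OF ch Dd Lam p K1])
  have gr: "\<And>i. i \<in> J \<Longrightarrow> i + 1 \<in> J \<Longrightarrow> \<not> Ra i \<Longrightarrow> h (i+1) \<ge> h i + 1"
    unfolding Ra_def h_def by (rule st_iii[OF ch Dd Lam p K1])
  have gl: "\<And>i. i \<in> J \<Longrightarrow> i + 1 \<in> J \<Longrightarrow> \<not> La (i+1) \<Longrightarrow> h i \<ge> h (i+1) + 1"
    unfolding La_def h_def by (rule st_iv[OF ch Dd Lam p K1])
  obtain j where jJ: "j \<in> J" and jmin: "\<forall>i\<in>J. h j \<le> h i"
    and minJ0: "\<forall>k\<in>J. (\<forall>i\<in>J. h k \<le> h i) \<longrightarrow> k \<in> J0"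
    and shape: "J0 = {j} \<or> J0 = {j, j+1} \<or> J0 = {j - 1, j}"
    using comb[where J=J and h=h and Ra=Ra and La=La, OF Jne cons hnn RL pr gr gl] unfolding J0eq[symmetric] by blast
  have P1: "\<forall>i\<in>J. \<not> (aligned d D (A i, x i, y i) (point_path p) \<and> aligned d D (point_path p) (A i, x i, y i))"
    using RL alR alL by blast
  have P2: "\<exists>j. J0 = {j} \<or> J0 = {j, j + 1}"
  proof -
    have "J0 = {j} \<or> J0 = {j, j + 1} \<or> J0 = {j - 1, (j - 1) + 1}" using shape by simp
    then show ?thesis by blast
  qed
  obtain v where v: "v \<in> proj d (A j) p" using contr_ne[OF ch_contr[OF ch jJ] p] .
  have vU: "v \<in> U" using proj_D(1)[OF v] jJ unfolding U_def by blast
  have hv: "d p v = h j" using proj_D(2)[OF v] unfolding h_def .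
  have lowU: "h j \<le> d p u" if uU: "u \<in> U" for u
  proof -
    obtain i where i: "i \<in> J" "u \<in> A i" using uU unfolding U_def by blast
    have "h i \<le> d p u" unfolding h_def by (rule setdist_le[OF MS i(2)])
    then show ?thesis using jmin i(1) by force
  qed
  have "Inf (d p ` U) = d p v"
  proof (rule cInf_eq_minimum)
    show "d p v \<in> d p ` U" using vU by (rule imageI)
  next
    fix r assume "r \<in> d p ` U"
    then obtain u where "u \<in> U" "r = d p u" by blast
    then show "d p v \<le> r" using lowU hv by simp
  qed
  then have sdU: "setdist d p U = h j" unfolding setdist_def using hv by simp
  have P3: "proj d U p \<noteq> {}"
  proof -
    have "v \<in> proj d U p" unfolding proj_def using vU hv sdU by simp
    then show ?thesis by blast
  qed
  have P4: "proj d U p \<subseteq> (\<Union>j\<in>J0. proj d (A j) p)"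
  proof
    fix u assume u: "u \<in> proj d U p"
    have uU: "u \<in> U" and du: "d p u = h j" using proj_D[OF u] sdU by auto
    obtain i where i: "i \<in> J" "u \<in> A i" using uU unfolding U_def by blast
    have hi: "h i \<le> d p u" unfolding h_def by (rule setdist_le[OF MS i(2)])
    have "h j \<le> h i" using jmin i(1) by blast
    then have hij: "h i = h j" using hi du by simp
    have "\<forall>i'\<in>J. h i \<le> h i'" using jmin hij by simp
    then have iJ0: "i \<in> J0" using minJ0 i(1) by blast
    have "u \<in> proj d (A i) p" unfolding proj_def using i(2) du hij unfolding h_def by simp
    then show "u \<in> (\<Union>j\<in>J0. proj d (A j) p)" using iJ0 by blast
  qed
  have LamK: "Lam > 26*K + 3*C" using Lam Dd ch_K[OF ch] ch_C[OF ch] by simp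
  have ch': "chainP M d K C Lam (uminus ` J) (\<lambda>i. A (-i)) (\<lambda>i. y (-i)) (\<lambda>i. x (-i))"
    by (rule chain_mirror[OF ch])
  have Q2: "2*(24*K + 2*C) < D" using Dd by simp
  have Qnn: "24*K + 2*C \<ge> 0" using ch_K[OF ch] ch_C[OF ch] by simp
  have P5: "\<forall>l\<in>J. \<forall>m\<in>J. l < m \<longrightarrow> aligned d D (A l, x l, y l) (A m, x m, y m)"
  proof (intro ballI impI)
    fix l m assume l: "l \<in> J" and m: "m \<in> J" and lm: "l < m"
    have S1: "proj_set d (A l) (A m) \<subseteq> M" unfolding proj_set_def using projM[OF ch l] by blast
    have S2: "proj_set d (A m) (A l) \<subseteq> M" unfolding proj_set_def using projM[OF ch m] by blast
    have B1: "d w (y l) \<le> 24*K + 2*C" if wS: "w \<in> proj_set d (A l) (A m)" for w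
    proof -
      obtain z where z: "z \<in> A m" "w \<in> proj d (A l) z" using wS unfolding proj_set_def by blast
      show ?thesis by (rule key2[OF ch LamK l m lm z])
    qed
    have B2: "d w (x m) \<le> 24*K + 2*C" if wS: "w \<in> proj_set d (A m) (A l)" for w
    proof -
      obtain z where z: "z \<in> A l" "w \<in> proj d (A m) z" using wS unfolding proj_set_def by blast
      have l': "-m \<in> uminus ` J" using imageI[OF m, of uminus] .
      have m': "-l \<in> uminus ` J" using imageI[OF l, of uminus] .
      have z': "z \<in> (\<lambda>i. A (-i)) (-l)" using z(1) by simp
      have w': "w \<in> proj d ((\<lambda>i. A (-i)) (-m)) z" using z(2) by simp
      have "d w ((\<lambda>i. x (-i)) (-m)) \<le> 24*K + 2*C"
        by (rule key2[OF ch' LamK l' m' _ z' w']) (use lm in simp)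
      then show ?thesis by simp
    qed
    have d1: "diam d (insert (y l) (proj_set d (A l) (A m))) < ereal D"
    proof -
      have "diam d (insert (y l) (proj_set d (A l) (A m))) \<le> ereal (2*(24*K + 2*C))"
        by (rule diam_ins[OF MS inM[OF ch l ch_y[OF ch l]] S1 B1 Qnn])
      also have "\<dots> < ereal D" using Q2 by simp
      finally show ?thesis .
    qed
    have d2: "diam d (insert (x m) (proj_set d (A m) (A l))) < ereal D"
    proof -
      have "diam d (insert (x m) (proj_set d (A m) (A l))) \<le> ereal (2*(24*K + 2*C))"
        by (rule diam_ins[OF MS inM[OF ch m ch_x[OF ch m]] S2 B2 Qnn])
      also have "\<dots> < ereal D" using Q2 by simp
      finally show ?thesis .
    qed
    show "aligned d D (A l, x l, y l) (A m, x m, y m)" unfolding aligned_def using d1 d2 by simp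
  qed
  show ?thesis using P1 P2 P3 P4 P5 by blast
qed



lemma aligned_pw:
  assumes "aligned d C (A1, a, a') (B, b', b)"
  shows "(\<forall>z\<in>B. \<forall>w\<in>proj d A1 z. d w a' < C) \<and> (\<forall>z\<in>A1. \<forall>w\<in>proj d B z. d w b' < C)"
proof -
  have h1: "diam d (insert a' (proj_set d A1 B)) < ereal C" and h2: "diam d (insert b' (proj_set d B A1)) < ereal C"
    using assms unfolding aligned_def by simp_all
  have "d w a' < C" if "z \<in> B" "w \<in> proj d A1 z" for z w
    by (rule diam_lt_D[OF h1]) (use that in \<open>auto simp: proj_set_def\<close>)
  moreover have "d w b' < C" if "z \<in> A1" "w \<in> proj d B z" for z w
    by (rule diam_lt_D[OF h2]) (use that in \<open>auto simp: proj_set_def\<close>)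
  ultimately show ?thesis by blast
qed

lemma axis_facts:
  assumes ax: "contracting_axis M d K \<kappa> I a b" and K: "K > 0" and L: "b - a > L"
  shows "\<kappa> ` I \<subseteq> M" "contracting M d K (\<kappa> ` I)" "\<kappa> a \<in> \<kappa> ` I" "\<kappa> b \<in> \<kappa> ` I"
    "d (\<kappa> a) (\<kappa> b) \<ge> L / K - K"
proof -
  have pd: "path_domain I a b" and q: "quasigeodesic d K \<kappa> I"
    using ax unfolding contracting_axis_def by auto
  show "\<kappa> ` I \<subseteq> M" "contracting M d K (\<kappa> ` I)" using ax unfolding contracting_axis_def by auto
  have ab: "a \<in> I" "b \<in> I" using pd unfolding path_domain_def by auto
  show "\<kappa> a \<in> \<kappa> ` I" "\<kappa> b \<in> \<kappa> ` I" using ab by auto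
  have "\<bar>a - b\<bar> / K - K \<le> d (\<kappa> a) (\<kappa> b)" using q ab unfolding quasigeodesic_def by blast
  moreover have "b - a \<le> \<bar>a - b\<bar>" by simp
  then have "(b - a) / K \<le> \<bar>a - b\<bar> / K" using K by (simp add: divide_right_mono)
  moreover have "L / K \<le> (b - a) / K" using L K by (simp add: divide_right_mono)
  ultimately show "d (\<kappa> a) (\<kappa> b) \<ge> L / K - K" by simp
qed

theorem proposition3p5:
  fixes C K :: real
  assumes "C > 0" and "K > 1"
  shows "\<exists>D L. D > C \<and> L > C \<and>
    (\<forall>(M :: 'a set) d (J :: int set) p (\<kappa> :: int \<Rightarrow> real \<Rightarrow> 'a) Dom s e.
       geodesic_space M d \<longrightarrow>
       J \<noteq> {} \<longrightarrow> consecutive_ints J \<longrightarrow> p \<in> M \<longrightarrow>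
       (\<forall>i\<in>J. contracting_axis M d K (\<kappa> i) (Dom i) (s i) (e i) \<and> e i - s i > L) \<longrightarrow>
       (\<forall>i\<in>J. i + 1 \<in> J \<longrightarrow>
          aligned d C (axis_path (\<kappa> i) (Dom i) (s i) (e i))
                      (axis_path (\<kappa> (i+1)) (Dom (i+1)) (s (i+1)) (e (i+1)))) \<longrightarrow>
       (let P = (\<lambda>i. axis_path (\<kappa> i) (Dom i) (s i) (e i));
            J0 = {j \<in> J. (\<forall>i\<in>J. i < j \<longrightarrow> aligned d D (P i) (point_path p)) \<and>
                          (\<forall>i\<in>J. i > j \<longrightarrow> aligned d D (point_path p) (P i))};
            U = (\<Union>i\<in>J. \<kappa> i ` Dom i)
        in (\<forall>i\<in>J. \<not> (aligned d D (P i) (point_path p) \<and> aligned d D (point_path p) (P i))) \<and>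
           (\<exists>j. J0 = {j} \<or> J0 = {j, j + 1}) \<and>
           proj d U p \<noteq> {} \<and>
           proj d U p \<subseteq> (\<Union>j\<in>J0. proj d (\<kappa> j ` Dom j) p) \<and>
           (\<forall>l\<in>J. \<forall>m\<in>J. l < m \<longrightarrow> aligned d D (P l) (P m))))"
proof -
  define D where "D = 48*K + 4*C + 1"
  define L where "L = K * (3*D + K + 1)"
  have K0: "K > 0" and K1: "K \<ge> 1" using assms by simp_all
  have DC: "D > C" unfolding D_def using assms by simp
  have D0: "D > 0" using DC assms by simp
  have LK: "L / K - K = 3*D + 1" unfolding L_def using K0 by (simp add: field_simps)
  have LC: "L > C"
  proof -
    have X: "K * (3*D + K + 1) \<ge> 1 * (3*D + K + 1)" using K1 D0 K0 by (intro mult_right_mono) auto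
    have X2: "K * (3*D + K + 1) \<ge> 3*D + K + 1" using X by simp
    have "C < 3*D + K + 1" using DC D0 K0 by simp
    then show ?thesis using X2 unfolding L_def by linarith
  qed
  show ?thesis
  proof (rule exI[where x=D], rule exI[where x=L], intro conjI DC LC allI impI)
    fix M d J p \<kappa> Dom s e
    assume GS: "geodesic_space M d" and Jne: "J \<noteq> {}" and cons: "consecutive_ints J" and p: "p \<in> M"
      and ax: "\<forall>i\<in>J. contracting_axis M d K (\<kappa> i) (Dom i) (s i) (e i) \<and> e i - s i > L"
      and al: "\<forall>i\<in>J. i + 1 \<in> J \<longrightarrow>
          aligned d C (axis_path (\<kappa> i) (Dom i) (s i) (e i))
                      (axis_path (\<kappa> (i+1)) (Dom (i+1)) (s (i+1)) (e (i+1)))"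
    have AF: "\<kappa> i ` Dom i \<subseteq> M \<and> contracting M d K (\<kappa> i ` Dom i) \<and> \<kappa> i (s i) \<in> \<kappa> i ` Dom i \<and>
        \<kappa> i (e i) \<in> \<kappa> i ` Dom i \<and> 3*D \<le> d (\<kappa> i (s i)) (\<kappa> i (e i))" if i: "i \<in> J" for i
    proof -
      have a1: "contracting_axis M d K (\<kappa> i) (Dom i) (s i) (e i)" and a2: "e i - s i > L" using ax i by auto
      show ?thesis using axis_facts[OF a1 K0 a2] LK by simp
    qed
    have AL: "(\<forall>z\<in>\<kappa> (i+1) ` Dom (i+1). \<forall>w\<in>proj d (\<kappa> i ` Dom i) z. d w (\<kappa> i (e i)) < C) \<and>
        (\<forall>z\<in>\<kappa> i ` Dom i. \<forall>w\<in>proj d (\<kappa> (i+1) ` Dom (i+1)) z. d w (\<kappa> (i+1) (s (i+1))) < C)"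
      if i: "i \<in> J" "i + 1 \<in> J" for i
    proof -
      have "aligned d C (axis_path (\<kappa> i) (Dom i) (s i) (e i))
                      (axis_path (\<kappa> (i+1)) (Dom (i+1)) (s (i+1)) (e (i+1)))" using al i by blast
      then show ?thesis unfolding axis_path_def by (rule aligned_pw)
    qed
    have ch: "chainP M d K C (3*D) J (\<lambda>i. \<kappa> i ` Dom i) (\<lambda>i. \<kappa> i (s i)) (\<lambda>i. \<kappa> i (e i))"
      unfolding chainP_def using GS K0 assms(1) cons AF AL by simp
    have main: "(\<forall>i\<in>J. \<not> (aligned d D (\<kappa> i ` Dom i, \<kappa> i (s i), \<kappa> i (e i)) (point_path p) \<and>
                  aligned d D (point_path p) (\<kappa> i ` Dom i, \<kappa> i (s i), \<kappa> i (e i)))) \<and>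
           (\<exists>j. {j \<in> J. (\<forall>i\<in>J. i < j \<longrightarrow> aligned d D (\<kappa> i ` Dom i, \<kappa> i (s i), \<kappa> i (e i)) (point_path p)) \<and>
                          (\<forall>i\<in>J. i > j \<longrightarrow> aligned d D (point_path p) (\<kappa> i ` Dom i, \<kappa> i (s i), \<kappa> i (e i)))} = {j} \<or>
                {j \<in> J. (\<forall>i\<in>J. i < j \<longrightarrow> aligned d D (\<kappa> i ` Dom i, \<kappa> i (s i), \<kappa> i (e i)) (point_path p)) \<and>
                          (\<forall>i\<in>J. i > j \<longrightarrow> aligned d D (point_path p) (\<kappa> i ` Dom i, \<kappa> i (s i), \<kappa> i (e i)))} = {j, j + 1}) \<and>
           proj d (\<Union>i\<in>J. \<kappa> i ` Dom i) p \<noteq> {} \<and>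
           proj d (\<Union>i\<in>J. \<kappa> i ` Dom i) p \<subseteq> (\<Union>j\<in>{j \<in> J. (\<forall>i\<in>J. i < j \<longrightarrow> aligned d D (\<kappa> i ` Dom i, \<kappa> i (s i), \<kappa> i (e i)) (point_path p)) \<and>
                          (\<forall>i\<in>J. i > j \<longrightarrow> aligned d D (point_path p) (\<kappa> i ` Dom i, \<kappa> i (s i), \<kappa> i (e i)))}. proj d (\<kappa> j ` Dom j) p) \<and>
           (\<forall>l\<in>J. \<forall>m\<in>J. l < m \<longrightarrow> aligned d D (\<kappa> l ` Dom l, \<kappa> l (s l), \<kappa> l (e l)) (\<kappa> m ` Dom m, \<kappa> m (s m), \<kappa> m (e m)))"
      by (rule main_abstract[OF ch D_def order.refl p K1 Jne])
    show "let P = (\<lambda>i. axis_path (\<kappa> i) (Dom i) (s i) (e i));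
            J0 = {j \<in> J. (\<forall>i\<in>J. i < j \<longrightarrow> aligned d D (P i) (point_path p)) \<and>
                          (\<forall>i\<in>J. i > j \<longrightarrow> aligned d D (point_path p) (P i))};
            U = (\<Union>i\<in>J. \<kappa> i ` Dom i)
        in (\<forall>i\<in>J. \<not> (aligned d D (P i) (point_path p) \<and> aligned d D (point_path p) (P i))) \<and>
           (\<exists>j. J0 = {j} \<or> J0 = {j, j + 1}) \<and>
           proj d U p \<noteq> {} \<and>
           proj d U p \<subseteq> (\<Union>j\<in>J0. proj d (\<kappa> j ` Dom j) p) \<and>
           (\<forall>l\<in>J. \<forall>m\<in>J. l < m \<longrightarrow> aligned d D (P l) (P m))"
      unfolding Let_def axis_path_def by (rule main)
  qed
qed


end
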